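(* Let $N$ be a finite set, $C\subseteq N$ with $|C|\ge2$, and $k\in\{1,\ldots,|C|-1\}$. The set function $m_{C,k}(S)=\max\{0,|S\cap C|-k\}$, $S\subseteq N$, is an extreme standardized supermodular function, and the objective $o(a|B)=m_{C,k}(\{a\}\cup B)-m_{C,k}(B)$, $(a|B)\in\Upsilon$, is exactly the objective of the $k$-cluster inequality $$\sum_{a\in C}\ \sum_{B\subseteq N\setminus\{a\}:\,|B\cap C|\ge k}\eta(a|B)\le |C|-k,$$ i.e. $o(a|B)=1$ if $a\in C$ and $|B\cap C|\ge k$, and $o(a|B)=0$ otherwise; moreover $\langle o,\eta_H\rangle=|C|-k$ for every full graph $H$ over $N$.
   Context: $\Upsilon=\{(a|B): a\in N,\ \emptyset\neq B\subseteq N\setminus\{a\}\}$; for an acyclic directed graph $G$ over $N$ with parent sets $\mathrm{pa}_G(a)$, $\eta_G\in\mathbb{R}^{\Upsilon}$ has $\eta_G(a|B)=1$ if $B=\mathrm{pa}_G(a)$, else $0$. A full graph is an acyclic directed graph over $N$ in which every pair of distinct nodes is adjacent. A set function $m:\mathcal{P}(N)\to\mathbb{R}$ is standardized if $m(S)=0$ for $|S|\le 1$, supermodular if $m(U)+m(V)\le m(U\cup V)+m(U\cap V)$ for all $U,V\subseteq N$; it is extreme if it generates an extreme ray of the (pointed polyhedral) cone of standardized supermodular functions. *)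

theory Defs
  imports Complex_Main
begin

text \<open>Set functions on the subsets of a finite ground set N are modelled as
  functions of type 'a set => real; only their values on subsets of N matter.\<close>

definition standardized :: "'a set \<Rightarrow> ('a set \<Rightarrow> real) \<Rightarrow> bool" where
  "standardized N m \<longleftrightarrow> (\<forall>S. S \<subseteq> N \<and> card S \<le> 1 \<longrightarrow> m S = 0)"

definition supermodular :: "'a set \<Rightarrow> ('a set \<Rightarrow> real) \<Rightarrow> bool" where
  "supermodular N m \<longleftrightarrow>
     (\<forall>U V. U \<subseteq> N \<and> V \<subseteq> N \<longrightarrow> m U + m V \<le> m (U \<union> V) + m (U \<inter> V))"

definition std_supermod_cone :: "'a set \<Rightarrow> ('a set \<Rightarrow> real) set" where
  "std_supermod_cone N = {m. standardized N m \<and> supermodular N m}"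

definition extreme :: "'a set \<Rightarrow> ('a set \<Rightarrow> real) \<Rightarrow> bool" where
  "extreme N m \<longleftrightarrow>
     m \<in> std_supermod_cone N \<and> (\<exists>S\<subseteq>N. m S \<noteq> 0) \<and>
     (\<forall>m1 m2. m1 \<in> std_supermod_cone N \<and> m2 \<in> std_supermod_cone N \<and>
        (\<forall>S\<subseteq>N. m S = m1 S + m2 S) \<longrightarrow>
        (\<exists>c\<ge>0. \<forall>S\<subseteq>N. m1 S = c * m S))"

definition Upsilon :: "'a set \<Rightarrow> ('a \<times> 'a set) set" where
  "Upsilon N = {(a, B). a \<in> N \<and> B \<noteq> {} \<and> B \<subseteq> N - {a}}"

text \<open>Acyclic directed graphs over N, given by their set of arrows (b,a) meaning b -> a.\<close>
definition is_dag :: "'a set \<Rightarrow> ('a \<times> 'a) set \<Rightarrow> bool" where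
  "is_dag N E \<longleftrightarrow> E \<subseteq> N \<times> N \<and> acyclic E"

definition pa :: "('a \<times> 'a) set \<Rightarrow> 'a \<Rightarrow> 'a set" where
  "pa E a = {b. (b, a) \<in> E}"

definition full_graph :: "'a set \<Rightarrow> ('a \<times> 'a) set \<Rightarrow> bool" where
  "full_graph N E \<longleftrightarrow> is_dag N E \<and>
     (\<forall>a\<in>N. \<forall>b\<in>N. a \<noteq> b \<longrightarrow> (a, b) \<in> E \<or> (b, a) \<in> E)"

definition eta :: "('a \<times> 'a) set \<Rightarrow> 'a \<times> 'a set \<Rightarrow> real" where
  "eta E = (\<lambda>(a, B). if B = pa E a then 1 else 0)"

definition inner_Ups :: "'a set \<Rightarrow> ('a \<times> 'a set \<Rightarrow> real) \<Rightarrow> ('a \<times> 'a set \<Rightarrow> real) \<Rightarrow> real" where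
  "inner_Ups N o' x = (\<Sum>ab\<in>Upsilon N. o' ab * x ab)"

definition m_Ck :: "'a set \<Rightarrow> nat \<Rightarrow> 'a set \<Rightarrow> real" where
  "m_Ck C k S = max 0 (real (card (S \<inter> C)) - real k)"

definition obj_of :: "('a set \<Rightarrow> real) \<Rightarrow> 'a \<times> 'a set \<Rightarrow> real" where
  "obj_of m = (\<lambda>(a, B). m (insert a B) - m B)"

definition cluster_obj :: "'a set \<Rightarrow> nat \<Rightarrow> 'a \<times> 'a set \<Rightarrow> real" where
  "cluster_obj C k = (\<lambda>(a, B). if a \<in> C \<and> card (B \<inter> C) \<ge> k then 1 else 0)"

end

theory Submission
  imports Defs
begin

lemma l1: fixes a b c d k :: real assumes "a+b=c+d" "d\<le>a" "d\<le>b"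
  shows "max 0 (a-k) + max 0 (b-k) \<le> max 0 (c-k) + max 0 (d-k)"
  using assms by (simp add: max_def)

lemma l2: fixes t k :: nat assumes "t \<noteq> k - 1" "1 \<le> k"
  shows "max 0 (real t + 2 - real k) + max 0 (real t - real k) = 2*max 0 (real t + 1 - real k)"
  using assms by (cases "k \<le> t") (auto simp: max_def)

lemma l3: fixes x k :: nat
  shows "max 0 (real x + 1 - real k) - max 0 (real x - real k) = (if k \<le> x then 1 else 0)"
  by (auto simp: max_def)

lemma mono_std:
  assumes "finite N" "standardized N f" "supermodular N f" "T \<subseteq> S" "S \<subseteq> N"
  shows "f T \<le> f S"
proof -
  have fin: "finite (S - T)" using assms finite_subset by blast
  have main: "D \<subseteq> N \<Longrightarrow> f T \<le> f (T \<union> D)" if "finite D" for D using that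
  proof (induction D rule: finite_induct)
    case empty then show ?case by simp
  next
    case (insert x D)
    have TD: "T \<union> D \<subseteq> N" using insert assms by auto
    have x: "x \<in> N" using insert by auto
    show ?case
    proof (cases "x \<in> T \<union> D")
      case True then have "T \<union> insert x D = T \<union> D" by auto
      then show ?thesis using insert by auto
    next
      case False
      have "f (T\<union>D) + f {x} \<le> f ((T\<union>D) \<union> {x}) + f ((T\<union>D) \<inter> {x})"
        using assms(3) TD x unfolding supermodular_def by blast
      moreover have "f {x} = 0" using assms(2) x unfolding standardized_def by auto
      moreover have "(T\<union>D) \<inter> {x} = {}" using False by auto
      moreover have "f {} = 0" using assms(2) unfolding standardized_def by auto
      moreover have "(T\<union>D) \<union> {x} = T \<union> insert x D" by auto
      ultimately have "f (T\<union>D) \<le> f (T \<union> insert x D)" by simp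
      then show ?thesis using insert by auto
    qed
  qed
  have "T \<union> (S - T) = S" using assms by auto
  then show ?thesis using main[OF fin] assms by auto
qed

lemma nonneg_std:
  assumes "finite N" "standardized N f" "supermodular N f" "S \<subseteq> N"
  shows "0 \<le> f S"
proof -
  have "f {} = 0" using assms(2) unfolding standardized_def by auto
  moreover have "f {} \<le> f S" using mono_std[OF assms(1-3)] assms(4) by blast
  ultimately show ?thesis by simp
qed

lemma core:
  fixes C :: "'a set" and k :: nat and g :: "'a set \<Rightarrow> real"
  assumes fin: "finite C" and kpos: "1 \<le> k" and kC: "k + 1 \<le> card C"
  and Z: "\<And>T. T \<subseteq> C \<Longrightarrow> card T \<le> k \<Longrightarrow> g T = 0"
  and D: "\<And>T a b. T \<subseteq> C \<Longrightarrow> a \<in> C \<Longrightarrow> b \<in> C \<Longrightarrow> a \<notin> T \<Longrightarrow> b \<notin> T \<Longrightarrow> a \<noteq> b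
     \<Longrightarrow> k \<le> card T \<Longrightarrow> g (insert a (insert b T)) + g T = g (insert a T) + g (insert b T)"
  shows "\<exists>c. \<forall>T \<subseteq> C. g T = c * max 0 (real (card T) - real k)"
proof -
  define inc where "inc T a = g (insert a T) - g T" for T a
  have inv: "inc (T \<union> E) a = inc T a"
    if "T \<subseteq> C" "k \<le> card T" "finite E" "E \<subseteq> C" "a \<in> C" "a \<notin> T \<union> E" for T E a
    using that(3,4,6)
  proof (induction E rule: finite_induct)
    case empty then show ?case by simp
  next
    case (insert x E)
    show ?case
    proof (cases "x \<in> T \<union> E")
      case True then have "T \<union> insert x E = T \<union> E" by auto
      then show ?thesis using insert by auto
    next
      case False
      have sub: "T \<union> E \<subseteq> C" using insert that by auto
      have "card T \<le> card (T \<union> E)" using fin sub by (intro card_mono) (auto intro: finite_subset)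
      then have "g (insert a (insert x (T \<union> E))) + g (T \<union> E) = g (insert a (T \<union> E)) + g (insert x (T \<union> E))"
        using D[OF sub, of a x] insert that False by auto
      moreover have "T \<union> insert x E = insert x (T \<union> E)" by auto
      moreover have "inc (T \<union> E) a = inc T a" using insert by auto
      ultimately show ?thesis unfolding inc_def by (simp add: insert_commute)
    qed
  qed
  have same: "inc T a = inc T' a"
    if "T \<subseteq> C" "T' \<subseteq> C" "k \<le> card T" "k \<le> card T'" "a \<in> C" "a \<notin> T" "a \<notin> T'" for T T' a
  proof -
    have "inc (T \<union> T') a = inc T a" using inv[of T T' a] that fin by (auto intro: finite_subset)
    moreover have "inc (T' \<union> T) a = inc T' a" using inv[of T' T a] that fin by (auto intro: finite_subset)
    ultimately show ?thesis by (simp add: Un_commute)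
  qed
  have all: "inc T a = inc T' b"
    if "T \<subseteq> C" "T' \<subseteq> C" "k \<le> card T" "k \<le> card T'" "a \<in> C" "b \<in> C" "a \<notin> T" "b \<notin> T'" for T T' a b
  proof (cases "a = b")
    case True then show ?thesis using same that by blast
  next
    case False
    have "card (C - {a,b}) = card C - 2" using that False fin by (simp add: card_Diff_subset)
    then have "k - 1 \<le> card (C - {a,b})" using kC by simp
    then obtain R where R: "R \<subseteq> C - {a,b}" "card R = k - 1" by (meson obtain_subset_with_card_n)
    have finR: "finite R" using R fin by (auto intro: finite_subset)
    have "a \<notin> R" "b \<notin> R" using R by auto
    then have ca: "card (insert a R) = k" and cb: "card (insert b R) = k" using R finR kpos by auto
    have z1: "g (insert a R) = 0" using Z[of "insert a R"] ca R that by auto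
    have z2: "g (insert b R) = 0" using Z[of "insert b R"] cb R that by auto
    have "inc (insert a R) b = inc (insert b R) a" unfolding inc_def using z1 z2 by (simp add: insert_commute)
    moreover have "inc T a = inc (insert b R) a" using same[of T "insert b R" a] that R cb False by auto
    moreover have "inc T' b = inc (insert a R) b" using same[of T' "insert a R" b] that R ca False by auto
    ultimately show ?thesis by simp
  qed
  obtain S0 where S0: "S0 \<subseteq> C" "card S0 = k + 1" using kC by (meson obtain_subset_with_card_n)
  then obtain x where x: "x \<in> S0" by fastforce
  define c where "c = inc (S0 - {x}) x"
  have finS0: "finite S0" using S0 fin by (auto intro: finite_subset)
  have cS0: "card (S0 - {x}) = k" using S0 x finS0 by simp
  have incc: "inc T a = c" if "T \<subseteq> C" "k \<le> card T" "a \<in> C" "a \<notin> T" for T a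
    unfolding c_def using all[of T "S0 - {x}" a x] that S0 x cS0 by auto
  have "\<forall>T. T \<subseteq> C \<longrightarrow> card T = n \<longrightarrow> g T = c * max 0 (real (card T) - real k)" for n
  proof (induction n)
    case 0 then show ?case using Z by auto
  next
    case (Suc n)
    show ?case
    proof (intro allI impI)
      fix T assume T: "T \<subseteq> C" "card T = Suc n"
      show "g T = c * max 0 (real (card T) - real k)"
      proof (cases "Suc n \<le> k")
        case True then show ?thesis using Z T by auto
      next
        case False
        obtain a where a: "a \<in> T" using T by fastforce
        have finT: "finite T" using T fin by (auto intro: finite_subset)
        have c1: "card (T - {a}) = n" using T a finT by simp
        have "g (T - {a}) = c * max 0 (real n - real k)" using Suc.IH T(1) c1 by (metis Diff_subset subset_trans)
        moreover have "inc (T - {a}) a = c" using incc[of "T - {a}" a] T a c1 False by auto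
        moreover have "insert a (T - {a}) = T" using a by auto
        ultimately have "g T = c * max 0 (real n - real k) + c" unfolding inc_def by simp
        then show ?thesis using T False by (simp add: max_def algebra_simps)
      qed
    qed
  qed
  then show ?thesis by blast
qed

theorem lemma9:
  fixes N C :: "'a set" and k :: nat
  assumes "finite N" and "C \<subseteq> N" and "card C \<ge> 2"
    and "1 \<le> k" and "k \<le> card C - 1"
  shows "extreme N (m_Ck C k)
    \<and> (\<forall>ab\<in>Upsilon N. obj_of (m_Ck C k) ab = cluster_obj C k ab)
    \<and> (\<forall>H. full_graph N H \<longrightarrow>
          inner_Ups N (obj_of (m_Ck C k)) (eta H) = real (card C) - real k)"
proof -
  let ?m = "m_Ck C k"
  have finC: "finite C" using assms finite_subset by blast
  have kC: "k + 1 \<le> card C" using assms by simp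
  have mC: "?m T = max 0 (real (card T) - real k)" if "T \<subseteq> C" for T
    unfolding m_Ck_def using that by (simp add: Int_absorb2)
  have mInt: "?m (S \<inter> C) = ?m S" for S unfolding m_Ck_def by (simp add: Int_assoc)
  have std: "standardized N ?m" unfolding standardized_def
  proof (intro allI impI)
    fix S assume S: "S \<subseteq> N \<and> card S \<le> 1"
    then have "finite S" using assms finite_subset by blast
    then have "card (S \<inter> C) \<le> card S" by (simp add: card_mono)
    then show "?m S = 0" using S assms(4) unfolding m_Ck_def by (simp add: max_def)
  qed
  have sup: "supermodular N ?m" unfolding supermodular_def
  proof (intro allI impI)
    fix U V assume UV: "U \<subseteq> N \<and> V \<subseteq> N"
    have fU: "finite (U \<inter> C)" "finite (V \<inter> C)" using finC by auto
    have e1: "(U \<union> V) \<inter> C = (U \<inter> C) \<union> (V \<inter> C)" "(U \<inter> V) \<inter> C = (U \<inter> C) \<inter> (V \<inter> C)" by auto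
    have s: "card (U \<inter> C) + card (V \<inter> C) = card ((U \<union> V) \<inter> C) + card ((U \<inter> V) \<inter> C)"
      unfolding e1 using card_Un_Int[OF fU] by simp
    have d1: "card ((U \<inter> V) \<inter> C) \<le> card (U \<inter> C)" "card ((U \<inter> V) \<inter> C) \<le> card (V \<inter> C)"
      unfolding e1 using fU by (auto intro: card_mono)
    show "?m U + ?m V \<le> ?m (U \<union> V) + ?m (U \<inter> V)" unfolding m_Ck_def
      by (rule l1) (use s d1 in \<open>simp_all flip: of_nat_add\<close>)
  qed
  have cone: "?m \<in> std_supermod_cone N" unfolding std_supermod_cone_def using std sup by auto
  have nz: "?m C \<noteq> 0" using mC[of C] kC by simp
  have ext: "extreme N ?m" unfolding extreme_def
  proof (intro conjI allI impI)
    show "?m \<in> std_supermod_cone N" by fact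
    show "\<exists>S\<subseteq>N. ?m S \<noteq> 0" using nz assms(2) by blast
  next
    fix m1 m2 assume H: "m1 \<in> std_supermod_cone N \<and> m2 \<in> std_supermod_cone N \<and> (\<forall>S\<subseteq>N. ?m S = m1 S + m2 S)"
    have s1: "standardized N m1" "supermodular N m1" and s2: "standardized N m2" "supermodular N m2"
      using H unfolding std_supermod_cone_def by auto
    have sum: "\<And>S. S \<subseteq> N \<Longrightarrow> ?m S = m1 S + m2 S" using H by auto
    have n1: "\<And>S. S \<subseteq> N \<Longrightarrow> 0 \<le> m1 S" using nonneg_std[OF assms(1) s1] .
    have n2: "\<And>S. S \<subseteq> N \<Longrightarrow> 0 \<le> m2 S" using nonneg_std[OF assms(1) s2] .
    have out: "m1 (S \<inter> C) = m1 S" if "S \<subseteq> N" for S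
    proof -
      have "m1 (S \<inter> C) \<le> m1 S" using mono_std[OF assms(1) s1] that by auto
      moreover have "m2 (S \<inter> C) \<le> m2 S" using mono_std[OF assms(1) s2] that by auto
      moreover have "m1 S + m2 S = m1 (S \<inter> C) + m2 (S \<inter> C)" using sum[of S] sum[of "S \<inter> C"] mInt[of S] that by auto
      ultimately show ?thesis by linarith
    qed
    have "\<exists>c. \<forall>T \<subseteq> C. m1 T = c * max 0 (real (card T) - real k)"
    proof (rule core[OF finC assms(4) kC])
      fix T assume T: "T \<subseteq> C" "card T \<le> k"
      have "?m T = 0" using mC[OF T(1)] T(2) by (simp add: max_def)
      moreover have "T \<subseteq> N" using T assms(2) by auto
      ultimately show "m1 T = 0" using sum[of T] n1[of T] n2[of T] by linarith
    next
      fix T a b assume T: "T \<subseteq> C" "a \<in> C" "b \<in> C" "a \<notin> T" "b \<notin> T" "a \<noteq> b" "k \<le> card T"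
      have TN: "insert a T \<subseteq> N" "insert b T \<subseteq> N" "T \<subseteq> N" "insert a (insert b T) \<subseteq> N" using T assms(2) by auto
      have un: "insert a T \<union> insert b T = insert a (insert b T)" by auto
      have it: "insert a T \<inter> insert b T = T" using T by auto
      have i1: "m1 (insert a T) + m1 (insert b T) \<le> m1 (insert a (insert b T)) + m1 T"
        using s1(2) TN unfolding supermodular_def by (metis un it)
      have i2: "m2 (insert a T) + m2 (insert b T) \<le> m2 (insert a (insert b T)) + m2 T"
        using s2(2) TN unfolding supermodular_def by (metis un it)
      have finT: "finite T" using T finC by (auto intro: finite_subset)
      have "?m (insert a (insert b T)) + ?m T = ?m (insert a T) + ?m (insert b T)"
      proof -
        have "card T \<noteq> k - 1" using T assms(4) by simp
        from l2[OF this assms(4)] show ?thesis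
          using T finT by (simp add: mC algebra_simps)
      qed
      then show "m1 (insert a (insert b T)) + m1 T = m1 (insert a T) + m1 (insert b T)"
        using i1 i2 sum TN by auto
    qed
    then obtain c where c: "\<forall>T \<subseteq> C. m1 T = c * max 0 (real (card T) - real k)" by blast
    have all: "m1 S = c * ?m S" if "S \<subseteq> N" for S
    proof -
      have "m1 S = m1 (S \<inter> C)" using out that by simp
      also have "\<dots> = c * ?m (S \<inter> C)" using c mC[of "S \<inter> C"] by auto
      finally show ?thesis using mInt by simp
    qed
    have "0 \<le> m1 C" using n1 assms(2) by auto
    moreover have "m1 C = c * ?m C" using all assms(2) by auto
    moreover have "0 < ?m C" using mC[of C] kC by simp
    ultimately have "0 \<le> c" by (simp add: zero_le_mult_iff)
    then show "\<exists>c\<ge>0. \<forall>S\<subseteq>N. m1 S = c * ?m S" using all by blast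
  qed
  have obj: "obj_of ?m ab = cluster_obj C k ab" if "ab \<in> Upsilon N" for ab
  proof -
    obtain a B where ab: "ab = (a, B)" by fastforce
    have aB: "a \<in> N" "B \<subseteq> N - {a}" using that ab unfolding Upsilon_def by auto
    have finB: "finite (B \<inter> C)" using finC by auto
    show ?thesis
    proof (cases "a \<in> C")
      case True
      have "insert a B \<inter> C = insert a (B \<inter> C)" using True by auto
      moreover have "a \<notin> B \<inter> C" using aB by auto
      ultimately have "card (insert a B \<inter> C) = card (B \<inter> C) + 1" using finB by simp
      then show ?thesis using True l3[of "card (B \<inter> C)" k]
        unfolding ab obj_of_def cluster_obj_def m_Ck_def by simp
    next
      case False
      then have "insert a B \<inter> C = B \<inter> C" by auto
      then show ?thesis using False unfolding ab obj_of_def cluster_obj_def m_Ck_def by simp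
    qed
  qed
  have graph: "inner_Ups N (obj_of ?m) (eta H) = real (card C) - real k" if H: "full_graph N H" for H
  proof -
    have HN: "H \<subseteq> N \<times> N" and acy: "acyclic H"
      and tour: "\<And>a b. a \<in> N \<Longrightarrow> b \<in> N \<Longrightarrow> a \<noteq> b \<Longrightarrow> (a, b) \<in> H \<or> (b, a) \<in> H"
      using H unfolding full_graph_def is_dag_def by auto
    have irr: "(a, a) \<notin> H" for a using acy unfolding acyclic_def by blast
    have trans: "(x, z) \<in> H" if "(x, y) \<in> H" "(y, z) \<in> H" for x y z
    proof -
      have "(x, z) \<in> H\<^sup>+" using that by auto
      then have "x \<noteq> z" using acy unfolding acyclic_def by blast
      moreover have "(z, x) \<notin> H"
      proof
        assume "(z, x) \<in> H"
        then have "(x, x) \<in> H\<^sup>+" using that by (meson trancl.simps trancl_trans)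
        then show False using acy unfolding acyclic_def by blast
      qed
      ultimately show ?thesis using tour that HN by blast
    qed
    define f where "f a = card (pa H a \<inter> C)" for a
    have paN: "pa H a \<subseteq> N - {a}" for a using HN irr unfolding pa_def by auto
    have lt: "f a < f b" if "a \<in> C" "b \<in> C" "(a, b) \<in> H" for a b
    proof -
      have "pa H a \<inter> C \<subseteq> pa H b \<inter> C" using trans that unfolding pa_def by blast
      moreover have "a \<in> pa H b \<inter> C" "a \<notin> pa H a \<inter> C" using that irr unfolding pa_def by auto
      ultimately have "pa H a \<inter> C \<subset> pa H b \<inter> C" by blast
      then show ?thesis unfolding f_def using finC by (simp add: psubset_card_mono)
    qed
    have inj: "inj_on f C"
    proof (rule inj_onI)
      fix a b assume "a \<in> C" "b \<in> C" "f a = f b"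
      then show "a = b" using lt tour assms(2) by (metis less_irrefl subsetD)
    qed
    have rng: "f ` C \<subseteq> {0..<card C}"
    proof
      fix y assume "y \<in> f ` C"
      then obtain a where a: "a \<in> C" "y = f a" by blast
      have "pa H a \<inter> C \<subseteq> C - {a}" using paN by auto
      then have "f a \<le> card (C - {a})" unfolding f_def using finC by (simp add: card_mono)
      then show "y \<in> {0..<card C}" using a finC assms(3) by simp
    qed
    have img: "f ` C = {0..<card C}"
      using card_subset_eq[OF _ rng] card_image[OF inj] by simp
    define A where "A = {a \<in> C. k \<le> f a}"
    have imgA: "f ` A = {k..<card C}"
    proof
      show "f ` A \<subseteq> {k..<card C}" unfolding A_def using img by auto
      show "{k..<card C} \<subseteq> f ` A"
      proof
        fix y assume y: "y \<in> {k..<card C}"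
        then have "y \<in> f ` C" using img by auto
        then obtain a where "a \<in> C" "y = f a" by blast
        then show "y \<in> f ` A" unfolding A_def using y by auto
      qed
    qed
    have cardA: "card A = card C - k"
      using card_image[OF inj_on_subset[OF inj, of A]] imgA unfolding A_def by auto
    define X where "X = (\<lambda>a. (a, pa H a)) ` A"
    have finU: "finite (Upsilon N)"
      by (rule finite_subset[of _ "N \<times> Pow N"]) (auto simp: Upsilon_def assms(1))
    have "inner_Ups N (obj_of ?m) (eta H) = (\<Sum>ab\<in>Upsilon N. cluster_obj C k ab * eta H ab)"
      unfolding inner_Ups_def using obj by simp
    also have "\<dots> = (\<Sum>ab\<in>Upsilon N. if ab \<in> X then 1 else 0)"
    proof (rule sum.cong[OF refl])
      fix ab assume ab: "ab \<in> Upsilon N"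
      obtain a B where e: "ab = (a, B)" by fastforce
      have "a \<in> N" using ab e unfolding Upsilon_def by auto
      show "cluster_obj C k ab * eta H ab = (if ab \<in> X then 1 else 0)"
        unfolding e cluster_obj_def eta_def X_def A_def f_def by auto
    qed
    also have "\<dots> = real (card X)"
    proof -
      have "X \<subseteq> Upsilon N"
      proof
        fix x assume "x \<in> X"
        then obtain a where a: "a \<in> C" "k \<le> f a" "x = (a, pa H a)" unfolding X_def A_def by auto
        have "pa H a \<noteq> {}" using a(2) assms(4) unfolding f_def by auto
        then show "x \<in> Upsilon N" using a paN assms(2) unfolding Upsilon_def by auto
      qed
      then show ?thesis using finU by (simp add: sum.If_cases Int_absorb1)
    qed
    also have "card X = card A" unfolding X_def by (rule card_image) (auto intro: inj_onI)
    finally show ?thesis using cardA kC by simp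
  qed
  show ?thesis using ext obj graph by blast
qed

end
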